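(* Let $(V,L,\varphi,E)$ be a valuation system such that $\varphi$ is $\Pi$-extendible. Then the valuation system $(V,\Pi L,\Pi\varphi,E)$ is $\Pi$-complete.
   Context: A valuation system $(V,L,\varphi,E)$ consists of: (i) a lattice $V$ which is $\sigma$-distributive, i.e. for every $a\in V$ and every sequence $(b_n)$ in $V$ whose infimum exists, $\bigwedge_n(a\vee b_n)$ exists and equals $a\vee\bigwedge_n b_n$, and dually for suprema; (ii) a sublattice $L$ of $V$; (iii) a partially ordered abelian group $E$ which is R-complete: whenever $x_1\ge x_2\ge\cdots$ and $y_1\ge y_2\ge\cdots$ in $E$ are such that $\bigwedge_n(x_n+y_n)$ exists, then $\bigwedge_n x_n$ and $\bigwedge_n y_n$ exist, and dually for increasing sequences and suprema; (iv) a valuation $\varphi:L\to E$, i.e. an order-preserving map with $\varphi(a\wedge b)+\varphi(a\vee b)=\varphi(a)+\varphi(b)$. A decreasing sequence $a_1\ge a_2\ge\cdots$ in $L$ is $\varphi$-convergent if $\bigwedge_n a_n$ exists in $V$ and $\bigwedge_n\varphi(a_n)$ exists in $E$. The system is $\Pi$-complete if for every $\varphi$-convergent decreasing sequence $(a_n)$ in $L$ we have $\bigwedge_n a_n\in L$ and $\varphi(\bigwedge_n a_n)=\bigwedge_n\varphi(a_n)$. Let $\Pi L:=\{\bigwedge_n a_n: (a_n)\text{ a }\varphi\text{-convergent decreasing sequence in }L\}$; this is a sublattice of $V$ containing $L$. $\varphi$ is $\Pi$-extendible if there is a valuation $\psi:\Pi L\to E$ with $\psi(\bigwedge_n a_n)=\bigwedge_n\varphi(a_n)$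 for every $\varphi$-convergent decreasing sequence $(a_n)$ in $L$; this $\psi$ is then unique and denoted $\Pi\varphi$. *)

theory Defs
  imports Main
begin

definition is_glb :: "'a::order set \<Rightarrow> 'a \<Rightarrow> bool" where
  "is_glb S x \<longleftrightarrow> (\<forall>s\<in>S. x \<le> s) \<and> (\<forall>y. (\<forall>s\<in>S. y \<le> s) \<longrightarrow> y \<le> x)"

definition is_lub :: "'a::order set \<Rightarrow> 'a \<Rightarrow> bool" where
  "is_lub S x \<longleftrightarrow> (\<forall>s\<in>S. s \<le> x) \<and> (\<forall>y. (\<forall>s\<in>S. s \<le> y) \<longrightarrow> x \<le> y)"

definition Glb :: "'a::order set \<Rightarrow> 'a" where
  "Glb S = (THE x. is_glb S x)"

text \<open>(i) sigma-distributivity of the lattice V (modelled as the whole type 'v).\<close>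

definition sigma_distributive :: "'v::lattice itself \<Rightarrow> bool" where
  "sigma_distributive (t::'v itself) \<longleftrightarrow>
     (\<forall>(a::'v) (b::nat\<Rightarrow>'v) x. is_glb (range b) x \<longrightarrow> is_glb (range (\<lambda>n. sup a (b n))) (sup a x)) \<and>
     (\<forall>(a::'v) (b::nat\<Rightarrow>'v) x. is_lub (range b) x \<longrightarrow> is_lub (range (\<lambda>n. inf a (b n))) (inf a x))"

definition sublattice :: "'v::lattice set \<Rightarrow> bool" where
  "sublattice L \<longleftrightarrow> (\<forall>a\<in>L. \<forall>b\<in>L. inf a b \<in> L \<and> sup a b \<in> L)"

text \<open>(iii) R-completeness of the partially ordered abelian group E (the whole type 'e).\<close>

definition R_complete :: "'e::ordered_ab_group_add itself \<Rightarrow> bool" where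
  "R_complete (t::'e itself) \<longleftrightarrow>
     (\<forall>(x::nat\<Rightarrow>'e) y. antimono x \<longrightarrow> antimono y \<longrightarrow> (\<exists>z. is_glb (range (\<lambda>n. x n + y n)) z) \<longrightarrow>
        (\<exists>u. is_glb (range x) u) \<and> (\<exists>v. is_glb (range y) v)) \<and>
     (\<forall>(x::nat\<Rightarrow>'e) y. mono x \<longrightarrow> mono y \<longrightarrow> (\<exists>z. is_lub (range (\<lambda>n. x n + y n)) z) \<longrightarrow>
        (\<exists>u. is_lub (range x) u) \<and> (\<exists>v. is_lub (range y) v))"

definition valuation :: "'v::lattice set \<Rightarrow> ('v \<Rightarrow> 'e::ordered_ab_group_add) \<Rightarrow> bool" where
  "valuation L \<phi> \<longleftrightarrow>
     (\<forall>a\<in>L. \<forall>b\<in>L. a \<le> b \<longrightarrow> \<phi> a \<le> \<phi> b) \<and>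
     (\<forall>a\<in>L. \<forall>b\<in>L. \<phi> (inf a b) + \<phi> (sup a b) = \<phi> a + \<phi> b)"

definition valuation_system :: "'v::lattice set \<Rightarrow> ('v \<Rightarrow> 'e::ordered_ab_group_add) \<Rightarrow> bool" where
  "valuation_system L \<phi> \<longleftrightarrow>
     sigma_distributive TYPE('v) \<and> sublattice L \<and> R_complete TYPE('e) \<and> valuation L \<phi>"

definition phi_convergent :: "'v::lattice set \<Rightarrow> ('v \<Rightarrow> 'e::ordered_ab_group_add) \<Rightarrow> (nat \<Rightarrow> 'v) \<Rightarrow> bool" where
  "phi_convergent L \<phi> a \<longleftrightarrow>
     (\<forall>n. a n \<in> L) \<and> antimono a \<and> (\<exists>x. is_glb (range a) x) \<and> (\<exists>y. is_glb (range (\<lambda>n. \<phi> (a n))) y)"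

definition Pi_complete :: "'v::lattice set \<Rightarrow> ('v \<Rightarrow> 'e::ordered_ab_group_add) \<Rightarrow> bool" where
  "Pi_complete L \<phi> \<longleftrightarrow>
     (\<forall>a. phi_convergent L \<phi> a \<longrightarrow>
        Glb (range a) \<in> L \<and> \<phi> (Glb (range a)) = Glb (range (\<lambda>n. \<phi> (a n))))"

definition PiL :: "'v::lattice set \<Rightarrow> ('v \<Rightarrow> 'e::ordered_ab_group_add) \<Rightarrow> 'v set" where
  "PiL L \<phi> = {Glb (range a) | a. phi_convergent L \<phi> a}"

definition Pi_ext_prop :: "'v::lattice set \<Rightarrow> ('v \<Rightarrow> 'e::ordered_ab_group_add) \<Rightarrow> ('v \<Rightarrow> 'e) \<Rightarrow> bool" where
  "Pi_ext_prop L \<phi> \<psi> \<longleftrightarrow> valuation (PiL L \<phi>) \<psi> \<and>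
     (\<forall>a. phi_convergent L \<phi> a \<longrightarrow> \<psi> (Glb (range a)) = Glb (range (\<lambda>n. \<phi> (a n))))"

definition Pi_extendible :: "'v::lattice set \<Rightarrow> ('v \<Rightarrow> 'e::ordered_ab_group_add) \<Rightarrow> bool" where
  "Pi_extendible L \<phi> \<longleftrightarrow> (\<exists>\<psi>. Pi_ext_prop L \<phi> \<psi>)"

text \<open>Pi phi: the (on PiL unique) extension; values outside PiL are irrelevant.\<close>

definition Pi_phi :: "'v::lattice set \<Rightarrow> ('v \<Rightarrow> 'e::ordered_ab_group_add) \<Rightarrow> 'v \<Rightarrow> 'e" where
  "Pi_phi L \<phi> = (SOME \<psi>. Pi_ext_prop L \<phi> \<psi>)"

end

theory Submission
  imports Defs
begin

lemma glb_unique: assumes "is_glb S x" "is_glb S y" shows "x = y"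
  using assms unfolding is_glb_def by (meson order.antisym)

lemma Glb_eq: "is_glb S x \<Longrightarrow> Glb S = x"
  unfolding Glb_def by (rule the_equality) (auto intro: glb_unique)

lemma glb_add:
  fixes x y :: "nat \<Rightarrow> 'e::ordered_ab_group_add"
  assumes ax: "antimono x" and ay: "antimono y" and gu: "is_glb (range x) u"
    and gv: "is_glb (range y) v"
  shows "is_glb (range (\<lambda>n. x n + y n)) (u + v)"
  unfolding is_glb_def
proof safe
  fix n show "u + v \<le> x n + y n" using gu gv unfolding is_glb_def by (simp add: add_mono)
next
  fix z assume h: "\<forall>s\<in>range (\<lambda>n. x n + y n). z \<le> s"
  have "z - v \<le> x m" for m
  proof -
    have "z - x m \<le> y n" for n
    proof -
      let ?k = "max m n"
      have "z \<le> x ?k + y ?k" using h by auto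
      also have "\<dots> \<le> x m + y n" using ax ay by (intro add_mono; auto intro: antimonoD)
      finally show ?thesis by (simp add: diff_le_eq add.commute)
    qed
    hence "z - x m \<le> v" using gv unfolding is_glb_def by auto
    thus ?thesis by (simp add: diff_le_eq le_diff_eq add.commute)
  qed
  hence "z - v \<le> u" using gu unfolding is_glb_def by auto
  thus "z \<le> u + v" by (simp add: diff_le_eq)
qed

lemma inf_glb:
  fixes a b :: "nat \<Rightarrow> 'v::lattice"
  assumes "is_glb (range a) x" "is_glb (range b) y"
  shows "is_glb (range (\<lambda>n. inf (a n) (b n))) (inf x y)"
  using assms unfolding is_glb_def
  by (auto intro: le_infI1 le_infI2)

lemma sup_glb:
  fixes a b :: "nat \<Rightarrow> 'v::lattice"
  assumes sd: "sigma_distributive TYPE('v)" and aa: "antimono a" and ab: "antimono b"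
    and gx: "is_glb (range a) x" and gy: "is_glb (range b) y"
  shows "is_glb (range (\<lambda>n. sup (a n) (b n))) (sup x y)"
  unfolding is_glb_def
proof safe
  fix n show "sup x y \<le> sup (a n) (b n)" using gx gy unfolding is_glb_def
    by (simp add: sup.coboundedI1 sup.coboundedI2)
next
  fix z assume h: "\<forall>s\<in>range (\<lambda>n. sup (a n) (b n)). z \<le> s"
  have d1: "is_glb (range (\<lambda>n. sup (a m) (b n))) (sup (a m) y)" for m
    using sd gy unfolding sigma_distributive_def by blast
  have d2: "is_glb (range (\<lambda>n. sup y (a n))) (sup y x)"
    using sd gx unfolding sigma_distributive_def by blast
  have "z \<le> sup y (a m)" for m
  proof -
    have "z \<le> sup (a m) (b n)" for n
    proof -
      let ?k = "max m n"
      have "z \<le> sup (a ?k) (b ?k)" using h by auto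
      also have "\<dots> \<le> sup (a m) (b n)" using aa ab by (intro sup_mono; auto intro: antimonoD)
      finally show ?thesis .
    qed
    hence "z \<le> sup (a m) y" using d1[of m] unfolding is_glb_def by auto
    thus ?thesis by (simp add: sup_commute)
  qed
  hence "z \<le> sup y x" using d2 unfolding is_glb_def by auto
  thus "z \<le> sup x y" by (simp add: sup_commute)
qed

lemma conv_glb:
  assumes "phi_convergent L \<phi> a"
  shows "is_glb (range a) (Glb (range a))" "is_glb (range (\<lambda>n. \<phi> (a n))) (Glb (range (\<lambda>n. \<phi> (a n))))"
  using assms unfolding phi_convergent_def by (metis Glb_eq)+

lemma PiL_closed:
  fixes L :: "'v::lattice set" and \<phi> :: "'v \<Rightarrow> 'e::ordered_ab_group_add"
  assumes vs: "valuation_system L \<phi>" and p: "p \<in> PiL L \<phi>" and q: "q \<in> PiL L \<phi>"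
  shows "inf p q \<in> PiL L \<phi> \<and> sup p q \<in> PiL L \<phi>"
proof -
  obtain a where ca: "phi_convergent L \<phi> a" and pa: "p = Glb (range a)"
    using p unfolding PiL_def by blast
  obtain b where cb: "phi_convergent L \<phi> b" and qb: "q = Glb (range b)"
    using q unfolding PiL_def by blast
  have sd: "sigma_distributive TYPE('v)" and sl: "sublattice L" and rc: "R_complete TYPE('e)"
    and val: "valuation L \<phi>" using vs unfolding valuation_system_def by auto
  have aL: "a n \<in> L" "b n \<in> L" "antimono a" "antimono b" for n
    using ca cb unfolding phi_convergent_def by auto
  have mon: "\<And>x y. x \<in> L \<Longrightarrow> y \<in> L \<Longrightarrow> x \<le> y \<Longrightarrow> \<phi> x \<le> \<phi> y"
    using val unfolding valuation_def by auto
  have modl: "\<And>x y. x \<in> L \<Longrightarrow> y \<in> L \<Longrightarrow> \<phi> (inf x y) + \<phi> (sup x y) = \<phi> x + \<phi> y"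
    using val unfolding valuation_def by auto
  define ai where "ai = (\<lambda>n. inf (a n) (b n))"
  define as where "as = (\<lambda>n. sup (a n) (b n))"
  have aiL: "ai n \<in> L" "as n \<in> L" for n using sl aL unfolding sublattice_def ai_def as_def by auto
  have aim: "antimono ai" "antimono as" unfolding ai_def as_def using aL(3,4)
    by (auto simp: antimono_def intro: le_infI1 le_infI2 le_supI1 le_supI2)
  have paim: "antimono (\<lambda>n. \<phi> (ai n))" "antimono (\<lambda>n. \<phi> (as n))"
    using aim aiL mon unfolding antimono_def by auto
  have pam: "antimono (\<lambda>n. \<phi> (a n))" "antimono (\<lambda>n. \<phi> (b n))"
    using aL mon unfolding antimono_def by auto
  have gs: "is_glb (range (\<lambda>n. \<phi> (a n) + \<phi> (b n))) (Glb (range (\<lambda>n. \<phi> (a n))) + Glb (range (\<lambda>n. \<phi> (b n))))"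
    using glb_add[OF pam conv_glb(2)[OF ca] conv_glb(2)[OF cb]] .
  have eqf: "(\<lambda>n. \<phi> (ai n) + \<phi> (as n)) = (\<lambda>n. \<phi> (a n) + \<phi> (b n))"
    using modl aL unfolding ai_def as_def by auto
  have "\<exists>z. is_glb (range (\<lambda>n. \<phi> (ai n) + \<phi> (as n))) z" unfolding eqf using gs by (rule exI)
  with rc paim have ex: "(\<exists>u. is_glb (range (\<lambda>n. \<phi> (ai n))) u) \<and> (\<exists>v. is_glb (range (\<lambda>n. \<phi> (as n))) v)"
    unfolding R_complete_def by blast
  have gi: "is_glb (range ai) (inf p q)" unfolding ai_def pa qb
    by (rule inf_glb[OF conv_glb(1)[OF ca] conv_glb(1)[OF cb]])
  have gsu: "is_glb (range as) (sup p q)" unfolding as_def pa qb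
    by (rule sup_glb[OF sd aL(3,4) conv_glb(1)[OF ca] conv_glb(1)[OF cb]])
  have "phi_convergent L \<phi> ai" "phi_convergent L \<phi> as"
    unfolding phi_convergent_def using aiL aim ex gi gsu by blast+
  moreover have "inf p q = Glb (range ai)" "sup p q = Glb (range as)"
    using Glb_eq gi gsu by metis+
  ultimately show ?thesis unfolding PiL_def by blast
qed

fun mi :: "(nat \<Rightarrow> nat \<Rightarrow> 'v::lattice) \<Rightarrow> nat \<Rightarrow> nat \<Rightarrow> 'v" where
  "mi A 0 k = A 0 k"
| "mi A (Suc j) k = inf (mi A j k) (A (Suc j) k)"

lemma mi_le: "n \<le> j \<Longrightarrow> mi A j k \<le> A n k"
  by (induction j) (auto simp: le_Suc_eq intro: le_infI1)

lemma mi_ge: "(\<And>n. n \<le> j \<Longrightarrow> z \<le> A n k) \<Longrightarrow> z \<le> mi A j k"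
  by (induction j) auto

lemma mi_in: "sublattice L \<Longrightarrow> (\<And>n k. A n k \<in> L) \<Longrightarrow> mi A j k \<in> L"
  by (induction j) (auto simp: sublattice_def)

lemma L_in_PiL:
  assumes "a \<in> L" shows "a \<in> PiL L \<phi>" "phi_convergent L \<phi> (\<lambda>_. a)"
proof -
  have g: "is_glb (range (\<lambda>_::nat. a)) a" "is_glb (range (\<lambda>_::nat. \<phi> a)) (\<phi> a)"
    unfolding is_glb_def by auto
  show c: "phi_convergent L \<phi> (\<lambda>_. a)" unfolding phi_convergent_def using assms g
    by (auto simp: antimono_def)
  have "a = Glb (range (\<lambda>_::nat. a))" using Glb_eq g by metis
  with c show "a \<in> PiL L \<phi>" unfolding PiL_def by blast
qed

theorem lemma5p4:
  fixes L :: "'v::lattice set" and \<phi> :: "'v \<Rightarrow> 'e::ordered_ab_group_add"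
  assumes "valuation_system L \<phi>"
    and "Pi_extendible L \<phi>"
  shows "valuation_system (PiL L \<phi>) (Pi_phi L \<phi>) \<and> Pi_complete (PiL L \<phi>) (Pi_phi L \<phi>)"
proof -
  define \<psi> where "\<psi> = Pi_phi L \<phi>"
  have P: "Pi_ext_prop L \<phi> \<psi>" unfolding \<psi>_def Pi_phi_def
    using assms(2) unfolding Pi_extendible_def by (rule someI_ex)
  have sd: "sigma_distributive TYPE('v)" and sl: "sublattice L" and rc: "R_complete TYPE('e)"
    and val: "valuation L \<phi>" using assms(1) unfolding valuation_system_def by auto
  have mon: "\<And>x y. x \<in> L \<Longrightarrow> y \<in> L \<Longrightarrow> x \<le> y \<Longrightarrow> \<phi> x \<le> \<phi> y"
    using val unfolding valuation_def by auto
  have vpsi: "valuation (PiL L \<phi>) \<psi>" and ext: "\<And>a. phi_convergent L \<phi> a \<Longrightarrow> \<psi> (Glb (range a)) = Glb (range (\<lambda>n. \<phi> (a n)))"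
    using P unfolding Pi_ext_prop_def by auto
  have pmon: "\<And>x y. x \<in> PiL L \<phi> \<Longrightarrow> y \<in> PiL L \<phi> \<Longrightarrow> x \<le> y \<Longrightarrow> \<psi> x \<le> \<psi> y"
    using vpsi unfolding valuation_def by auto
  have psiL: "\<psi> a = \<phi> a" if "a \<in> L" for a
  proof -
    have "\<psi> (Glb (range (\<lambda>_::nat. a))) = Glb (range (\<lambda>_::nat. \<phi> a))"
      using ext L_in_PiL(2)[OF that] by blast
    moreover have "Glb (range (\<lambda>_::nat. a)) = a" "Glb (range (\<lambda>_::nat. \<phi> a)) = \<phi> a"
      by (rule Glb_eq, unfold is_glb_def, auto)+
    ultimately show ?thesis by simp
  qed
  have slP: "sublattice (PiL L \<phi>)" unfolding sublattice_def using PiL_closed[OF assms(1)] by blast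
  have vs: "valuation_system (PiL L \<phi>) \<psi>" unfolding valuation_system_def
    using sd slP rc vpsi by blast
  have "Pi_complete (PiL L \<phi>) \<psi>" unfolding Pi_complete_def
  proof (intro allI impI)
    fix c assume cc: "phi_convergent (PiL L \<phi>) \<psi> c"
    have cP: "c n \<in> PiL L \<phi>" for n using cc unfolding phi_convergent_def by auto
    have cam: "antimono c" using cc unfolding phi_convergent_def by auto
    have gc: "is_glb (range c) (Glb (range c))" and gpc: "is_glb (range (\<lambda>n. \<psi> (c n))) (Glb (range (\<lambda>n. \<psi> (c n))))"
      using conv_glb[OF cc] by auto
    have "\<forall>n. \<exists>B. phi_convergent L \<phi> B \<and> c n = Glb (range B)"
      using cP unfolding PiL_def by blast
    then obtain A where A: "\<And>n. phi_convergent L \<phi> (A n)" "\<And>n. c n = Glb (range (A n))"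
      by metis
    have AL: "A n k \<in> L" and Aam: "antimono (A n)" for n k using A(1) unfolding phi_convergent_def by auto
    have gA: "is_glb (range (A n)) (c n)" for n using conv_glb(1)[OF A(1)] A(2) by metis
    have gpA: "is_glb (range (\<lambda>k. \<phi> (A n k))) (\<psi> (c n))" for n
      using conv_glb(2)[OF A(1)] A(2) ext[OF A(1)] by metis
    define d where "d = (\<lambda>k. mi A k k)"
    have dL: "d k \<in> L" for k unfolding d_def using mi_in[OF sl] AL by blast
    have dA: "n \<le> k \<Longrightarrow> d k \<le> A n k" for n k unfolding d_def by (rule mi_le)
    have dA2: "d (max n k) \<le> A n k" for n k
    proof -
      have "d (max n k) \<le> A n (max n k)" by (rule dA) simp
      also have "\<dots> \<le> A n k" using Aam by (auto intro: antimonoD)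
      finally show ?thesis .
    qed
    have dam: "antimono d" unfolding antimono_def
    proof (intro allI impI)
      fix k k' :: nat assume "k \<le> k'"
      show "d k' \<le> d k" unfolding d_def
      proof (rule mi_ge)
        fix n assume "n \<le> k"
        have "mi A k' k' \<le> A n k'" using \<open>n \<le> k\<close> \<open>k \<le> k'\<close> by (intro mi_le) simp
        also have "\<dots> \<le> A n k" using Aam \<open>k \<le> k'\<close> by (auto intro: antimonoD)
        finally show "mi A k' k' \<le> A n k" .
      qed
    qed
    have cd: "c k \<le> d k" for k unfolding d_def
    proof (rule mi_ge)
      fix n assume "n \<le> k"
      have "c k \<le> c n" using cam \<open>n \<le> k\<close> by (auto intro: antimonoD)
      also have "\<dots> \<le> A n k" using gA[of n] unfolding is_glb_def by auto
      finally show "c k \<le> A n k" .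
    qed
    have gd: "is_glb (range d) (Glb (range c))" unfolding is_glb_def
    proof safe
      fix k show "Glb (range c) \<le> d k" using cd[of k] gc unfolding is_glb_def
        by (meson order.trans rangeI)
    next
      fix z assume h: "\<forall>s\<in>range d. z \<le> s"
      have "z \<le> c n" for n
      proof -
        have "z \<le> A n k" for k using h dA2[of n k] by (meson order.trans rangeI)
        thus ?thesis using gA[of n] unfolding is_glb_def by auto
      qed
      thus "z \<le> Glb (range c)" using gc unfolding is_glb_def by auto
    qed
    have gpd: "is_glb (range (\<lambda>k. \<phi> (d k))) (Glb (range (\<lambda>n. \<psi> (c n))))" unfolding is_glb_def
    proof safe
      fix k
      have "Glb (range (\<lambda>n. \<psi> (c n))) \<le> \<psi> (c k)" using gpc unfolding is_glb_def by auto
      also have "\<dots> \<le> \<psi> (d k)" using pmon cP cd L_in_PiL(1)[OF dL] by blast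
      also have "\<dots> = \<phi> (d k)" using psiL dL by blast
      finally show "Glb (range (\<lambda>n. \<psi> (c n))) \<le> \<phi> (d k)" .
    next
      fix z assume h: "\<forall>s\<in>range (\<lambda>k. \<phi> (d k)). z \<le> s"
      have "z \<le> \<psi> (c n)" for n
      proof -
        have "z \<le> \<phi> (A n k)" for k
        proof -
          have "z \<le> \<phi> (d (max n k))" using h by auto
          also have "\<dots> \<le> \<phi> (A n k)" using mon dL AL dA2 by blast
          finally show ?thesis .
        qed
        thus ?thesis using gpA[of n] unfolding is_glb_def by auto
      qed
      thus "z \<le> Glb (range (\<lambda>n. \<psi> (c n)))" using gpc unfolding is_glb_def by auto
    qed
    have dc: "phi_convergent L \<phi> d" unfolding phi_convergent_def using dL dam gd gpd by blast
    have eq: "Glb (range d) = Glb (range c)" using Glb_eq gd by blast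
    show "Glb (range c) \<in> PiL L \<phi> \<and> \<psi> (Glb (range c)) = Glb (range (\<lambda>n. \<psi> (c n)))"
    proof
      show "Glb (range c) \<in> PiL L \<phi>" using dc eq unfolding PiL_def by (metis (mono_tags, lifting) mem_Collect_eq)
      show "\<psi> (Glb (range c)) = Glb (range (\<lambda>n. \<psi> (c n)))"
        using ext[OF dc] eq Glb_eq[OF gpd] by simp
    qed
  qed
  with vs show ?thesis unfolding \<psi>_def by blast
qed

end
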